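(* Let $G$ be a finite connected groupoid with $G_0=\{e_1,\dots,e_r\}$, $A=\bigoplus_{i=1}^r A_i$ a unital ring with $A_i:=A_{e_i}$ having identity $1_i$, and $\alpha=(A_g,\alpha_g)_{g\in G}$ a unital partial action of $G$ on $A$. If there exists $a\in C(A)$ such that $t_i(a)=1_i$ for all $i=1,\dots,r$, then $A\subset A\star_\alpha G$ is a semisimple ring extension.
   Context: A groupoid $G$ is a small category in which every morphism is invertible; $G_0$ is its object set (objects identified with identity morphisms), $s,t$ source and target; $gh$ is defined iff $s(g)=t(h)$; $G(e,f)$ is the set of morphisms from $e$ to $f$; $G$ is connected if $G(e,f)\neq\emptyset$ for all $e,f\in G_0$. A unital partial action of $G$ on $A$ is a family $\alpha=(A_g,\alpha_g)_{g\in G}$ where $A_{t(g)}$ is a two-sided ideal of $A$, $A_g=A1_g$ is a two-sided ideal of $A_{t(g)}$ with $1_g$ a central idempotent of $A$, $\alpha_g:A_{g^{-1}}\to A_g$ a ring isomorphism, such that $\alpha_e=\mathrm{id}_{A_e}$ for $e\in G_0$, $\alpha_h^{-1}(A_{g^{-1}}\cap A_h)\subseteq A_{(gh)^{-1}}$ and $\alpha_g(\alpha_h(x))=\alpha_{gh}(x)$ for $x\in\alpha_h^{-1}(A_{g^{-1}}\cap A_h)$, whenever $s(g)=t(h)$. The partial skew groupoid ring $A\star_\alpha G=\bigoplus_{g\in G}A_g\delta_g$ has multiplication $(a_g\delta_g)(b_h\delta_h)=\alpha_g(\alpha_{g^{-1}}(a_g)b_h)\delta_{gh}$ if $s(g)=t(h)$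 and $0$ otherwise; it is unital with $1=\sum_{e\in G_0}1_e\delta_e$, and $A$ is regarded as a subring via $a\mapsto\sum_{e\in G_0}(a1_e)\delta_e$. Trace maps: $t_{i,j}(a)=\sum_{g\in G(e_i,e_j)}\alpha_g(a1_{g^{-1}})$ and $t_j(a)=\sum_{i=1}^r t_{i,j}(a)$. $C(A)$ is the center of $A$. A ring extension $R\subseteq S$ is semisimple if every exact sequence of left $S$-modules that splits as a sequence of left $R$-modules also splits as a sequence of left $S$-modules. *)

theory Defs
  imports Main "HOL-Algebra.Module"
begin

section \<open>Groupoids (objects identified with identity morphisms)\<close>

definition objs :: "'g set \<Rightarrow> ('g \<Rightarrow> 'g) \<Rightarrow> 'g set" where
  "objs G s = s ` G"

definition groupoid ::
  "'g set \<Rightarrow> ('g \<Rightarrow> 'g) \<Rightarrow> ('g \<Rightarrow> 'g) \<Rightarrow> ('g \<Rightarrow> 'g \<Rightarrow> 'g) \<Rightarrow> ('g \<Rightarrow> 'g) \<Rightarrow> bool" where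
  "groupoid G s t cmp gi \<longleftrightarrow>
     (\<forall>g\<in>G. s g \<in> G \<and> t g \<in> G \<and> s (s g) = s g \<and> t (s g) = s g
              \<and> s (t g) = t g \<and> t (t g) = t g) \<and>
     (\<forall>g\<in>G. \<forall>h\<in>G. s g = t h \<longrightarrow>
        cmp g h \<in> G \<and> s (cmp g h) = s h \<and> t (cmp g h) = t g) \<and>
     (\<forall>f\<in>G. \<forall>g\<in>G. \<forall>h\<in>G. s f = t g \<longrightarrow> s g = t h \<longrightarrow>
        cmp (cmp f g) h = cmp f (cmp g h)) \<and>
     (\<forall>g\<in>G. cmp (t g) g = g \<and> cmp g (s g) = g) \<and>
     (\<forall>g\<in>G. gi g \<in> G \<and> s (gi g) = t g \<and> t (gi g) = s g \<and>
              cmp g (gi g) = t g \<and> cmp (gi g) g = s g)"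

definition connected_groupoid ::
  "'g set \<Rightarrow> ('g \<Rightarrow> 'g) \<Rightarrow> ('g \<Rightarrow> 'g) \<Rightarrow> bool" where
  "connected_groupoid G s t \<longleftrightarrow>
     (\<forall>e\<in>objs G s. \<forall>f\<in>objs G s. \<exists>g\<in>G. s g = e \<and> t g = f)"

text \<open>u g plays the role of the central idempotent 1_g, and A_g = A 1_g.\<close>

definition Aid :: "('g \<Rightarrow> 'a::ring_1) \<Rightarrow> 'g \<Rightarrow> 'a set" where
  "Aid u g = {a * u g | a. True}"

definition unital_partial_action ::
  "'g set \<Rightarrow> ('g \<Rightarrow> 'g) \<Rightarrow> ('g \<Rightarrow> 'g) \<Rightarrow> ('g \<Rightarrow> 'g \<Rightarrow> 'g) \<Rightarrow> ('g \<Rightarrow> 'g)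
   \<Rightarrow> ('g \<Rightarrow> 'a::ring_1) \<Rightarrow> ('g \<Rightarrow> 'a \<Rightarrow> 'a) \<Rightarrow> bool" where
  "unital_partial_action G s t cmp gi u \<alpha> \<longleftrightarrow>
     (\<forall>g\<in>G. u g * u g = u g \<and> (\<forall>a. a * u g = u g * a)) \<and>
     (\<forall>g\<in>G. Aid u g \<subseteq> Aid u (t g)) \<and>
     (\<forall>g\<in>G. bij_betw (\<alpha> g) (Aid u (gi g)) (Aid u g) \<and>
        (\<forall>x\<in>Aid u (gi g). \<forall>y\<in>Aid u (gi g).
            \<alpha> g (x + y) = \<alpha> g x + \<alpha> g y \<and> \<alpha> g (x * y) = \<alpha> g x * \<alpha> g y)) \<and>
     (\<forall>e\<in>objs G s. \<forall>x\<in>Aid u e. \<alpha> e x = x) \<and>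
     (\<forall>g\<in>G. \<forall>h\<in>G. s g = t h \<longrightarrow>
        (\<forall>x\<in>Aid u (gi h). \<alpha> h x \<in> Aid u (gi g) \<longrightarrow>
            x \<in> Aid u (gi (cmp g h)) \<and> \<alpha> g (\<alpha> h x) = \<alpha> (cmp g h) x))"

definition direct_sum_objs :: "'g set \<Rightarrow> ('g \<Rightarrow> 'g) \<Rightarrow> ('g \<Rightarrow> 'a::ring_1) \<Rightarrow> bool" where
  "direct_sum_objs G s u \<longleftrightarrow>
     (\<Sum>e\<in>objs G s. u e) = 1 \<and>
     (\<forall>e\<in>objs G s. \<forall>f\<in>objs G s. e \<noteq> f \<longrightarrow> u e * u f = 0)"

definition trace_ij ::
  "'g set \<Rightarrow> ('g \<Rightarrow> 'g) \<Rightarrow> ('g \<Rightarrow> 'g) \<Rightarrow> ('g \<Rightarrow> 'g)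
   \<Rightarrow> ('g \<Rightarrow> 'a::ring_1) \<Rightarrow> ('g \<Rightarrow> 'a \<Rightarrow> 'a) \<Rightarrow> 'g \<Rightarrow> 'g \<Rightarrow> 'a \<Rightarrow> 'a" where
  "trace_ij G s t gi u \<alpha> ei ej a =
     (\<Sum>g\<in>{g\<in>G. s g = ei \<and> t g = ej}. \<alpha> g (a * u (gi g)))"

definition trace_j ::
  "'g set \<Rightarrow> ('g \<Rightarrow> 'g) \<Rightarrow> ('g \<Rightarrow> 'g) \<Rightarrow> ('g \<Rightarrow> 'g)
   \<Rightarrow> ('g \<Rightarrow> 'a::ring_1) \<Rightarrow> ('g \<Rightarrow> 'a \<Rightarrow> 'a) \<Rightarrow> 'g \<Rightarrow> 'a \<Rightarrow> 'a" where
  "trace_j G s t gi u \<alpha> ej a = (\<Sum>ei\<in>objs G s. trace_ij G s t gi u \<alpha> ei ej a)"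

text \<open>Elements of A \<star>_\<alpha> G are functions x with x g \<in> A_g for g \<in> G and
  x g = 0 otherwise (x stands for the sum of x g \<delta>_g).\<close>

definition skew_ring ::
  "'g set \<Rightarrow> ('g \<Rightarrow> 'g) \<Rightarrow> ('g \<Rightarrow> 'g) \<Rightarrow> ('g \<Rightarrow> 'g \<Rightarrow> 'g) \<Rightarrow> ('g \<Rightarrow> 'g)
   \<Rightarrow> ('g \<Rightarrow> 'a::ring_1) \<Rightarrow> ('g \<Rightarrow> 'a \<Rightarrow> 'a) \<Rightarrow> ('g \<Rightarrow> 'a) ring" where
  "skew_ring G s t cmp gi u \<alpha> =
     \<lparr> carrier = {x. \<forall>g. (g \<in> G \<longrightarrow> x g \<in> Aid u g) \<and> (g \<notin> G \<longrightarrow> x g = 0)},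
       mult = (\<lambda>x y k. \<Sum>(g, h)\<in>{(g, h) \<in> G \<times> G. s g = t h \<and> cmp g h = k}.
                          \<alpha> g (\<alpha> (gi g) (x g) * y h)),
       one = (\<lambda>g. if g \<in> objs G s then u g else 0),
       zero = (\<lambda>g. 0),
       add = (\<lambda>x y g. x g + y g) \<rparr>"

definition skew_emb ::
  "'g set \<Rightarrow> ('g \<Rightarrow> 'g) \<Rightarrow> ('g \<Rightarrow> 'a::ring_1) \<Rightarrow> 'a \<Rightarrow> ('g \<Rightarrow> 'a)" where
  "skew_emb G s u a = (\<lambda>g. if g \<in> objs G s then a * u g else 0)"

definition left_module :: "('r, 'x) ring_scheme \<Rightarrow> ('r, 'm) module \<Rightarrow> bool" where
  "left_module R M \<longleftrightarrow> abelian_group M \<and>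
     (\<forall>r\<in>carrier R. \<forall>x\<in>carrier M. smult M r x \<in> carrier M) \<and>
     (\<forall>r\<in>carrier R. \<forall>r'\<in>carrier R. \<forall>x\<in>carrier M.
        smult M (add R r r') x = add M (smult M r x) (smult M r' x)) \<and>
     (\<forall>r\<in>carrier R. \<forall>x\<in>carrier M. \<forall>y\<in>carrier M.
        smult M r (add M x y) = add M (smult M r x) (smult M r y)) \<and>
     (\<forall>r\<in>carrier R. \<forall>r'\<in>carrier R. \<forall>x\<in>carrier M.
        smult M (mult R r r') x = smult M r (smult M r' x)) \<and>
     (\<forall>x\<in>carrier M. smult M (one R) x = x)"

definition lin_map :: "'r set \<Rightarrow> ('r, 'm) module \<Rightarrow> ('r, 'n) module \<Rightarrow> ('m \<Rightarrow> 'n) \<Rightarrow> bool" where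
  "lin_map T M N f \<longleftrightarrow> f \<in> carrier M \<rightarrow> carrier N \<and>
     (\<forall>x\<in>carrier M. \<forall>y\<in>carrier M. f (add M x y) = add N (f x) (f y)) \<and>
     (\<forall>r\<in>T. \<forall>x\<in>carrier M. f (smult M r x) = smult N r (f x))"

definition short_exact ::
  "('r, 'x) ring_scheme \<Rightarrow> ('r, 'm1) module \<Rightarrow> ('r, 'm2) module \<Rightarrow> ('r, 'm3) module
   \<Rightarrow> ('m1 \<Rightarrow> 'm2) \<Rightarrow> ('m2 \<Rightarrow> 'm3) \<Rightarrow> bool" where
  "short_exact R M1 M2 M3 f g \<longleftrightarrow>
     left_module R M1 \<and> left_module R M2 \<and> left_module R M3 \<and>
     lin_map (carrier R) M1 M2 f \<and> lin_map (carrier R) M2 M3 g \<and>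
     inj_on f (carrier M1) \<and>
     f ` carrier M1 = {y \<in> carrier M2. g y = zero M3} \<and>
     g ` carrier M2 = carrier M3"

definition splits_wrt :: "'r set \<Rightarrow> ('r, 'm2) module \<Rightarrow> ('r, 'm3) module \<Rightarrow> ('m2 \<Rightarrow> 'm3) \<Rightarrow> bool" where
  "splits_wrt T M2 M3 g \<longleftrightarrow> (\<exists>h. lin_map T M3 M2 h \<and> (\<forall>z\<in>carrier M3. g (h z) = z))"

text \<open>Semisimplicity condition of the extension \<phi>(R) \<subseteq> S, instantiated at
  modules M1, M2, M3 (the theorem quantifies over all of them and all types):
  an exact sequence of left S-modules which splits as a sequence of left
  R-modules (scalars restricted along \<phi>) splits as a sequence of S-modules.\<close>

definition semisimple_ext_at ::
  "('r, 'x) ring_scheme \<Rightarrow> 'r set \<Rightarrow> ('r, 'm1) module \<Rightarrow> ('r, 'm2) module \<Rightarrow> ('r, 'm3) module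
   \<Rightarrow> ('m1 \<Rightarrow> 'm2) \<Rightarrow> ('m2 \<Rightarrow> 'm3) \<Rightarrow> bool" where
  "semisimple_ext_at S Rimg M1 M2 M3 f g \<longleftrightarrow>
     (short_exact S M1 M2 M3 f g \<and> splits_wrt Rimg M2 M3 g \<longrightarrow>
        splits_wrt (carrier S) M2 M3 g)"

end

theory Submission
  imports Defs
begin


lemma add_hom_zero:
  assumes "abelian_group M" "abelian_group N" "f \<in> carrier M \<rightarrow> carrier N"
    "\<forall>x\<in>carrier M. \<forall>y\<in>carrier M. f (add M x y) = add N (f x) (f y)"
  shows "f (zero M) = zero N"
proof -
  interpret M: abelian_group M by fact
  interpret N: abelian_group N by fact
  have z: "f (zero M) \<in> carrier N" using assms(3) by auto
  have "f (zero M) = add N (f (zero M)) (f (zero M))"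
    using assms(4) by (metis M.zero_closed M.l_zero)
  then show ?thesis using z
    by (metis N.add.l_cancel_one' N.zero_closed N.r_zero)
qed

lemma add_hom_finsum:
  assumes "abelian_group M" "abelian_group N" "f \<in> carrier M \<rightarrow> carrier N"
    "\<forall>x\<in>carrier M. \<forall>y\<in>carrier M. f (add M x y) = add N (f x) (f y)"
    "finite I" "\<phi> \<in> I \<rightarrow> carrier M"
  shows "f (finsum M \<phi> I) = finsum N (\<lambda>i. f (\<phi> i)) I"
  using assms(5,6)
proof (induction I rule: finite_induct)
  case empty
  interpret M: abelian_group M by fact
  interpret N: abelian_group N by fact
  show ?case using add_hom_zero[OF assms(1-4)] by simp
next
  case (insert i I)
  interpret M: abelian_group M by fact
  interpret N: abelian_group N by fact
  have p: "\<phi> \<in> I \<rightarrow> carrier M" "\<phi> i \<in> carrier M" using insert by auto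
  have "f (finsum M \<phi> (insert i I)) = f (add M (\<phi> i) (finsum M \<phi> I))"
    using insert p by (simp add: M.finsum_insert)
  also have "\<dots> = add N (f (\<phi> i)) (f (finsum M \<phi> I))"
    using assms(4) p M.finsum_closed by blast
  also have "\<dots> = finsum N (\<lambda>i. f (\<phi> i)) (insert i I)"
    using insert p assms(3) by (subst N.finsum_insert) (auto simp: Pi_def)
  finally show ?case .
qed

lemma finsum_swap:
  assumes "abelian_group M" "finite I" "finite J" "\<And>i j. i \<in> I \<Longrightarrow> j \<in> J \<Longrightarrow> f i j \<in> carrier M"
  shows "finsum M (\<lambda>i. finsum M (\<lambda>j. f i j) J) I = finsum M (\<lambda>j. finsum M (\<lambda>i. f i j) I) J"
  using assms(2,4)
proof (induction I rule: finite_induct)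
  case empty
  interpret M: abelian_group M by fact
  show ?case by (simp add: M.finsum_zero)
next
  case (insert i I)
  interpret M: abelian_group M by fact
  have "finsum M (\<lambda>i. finsum M (\<lambda>j. f i j) J) (insert i I)
      = add M (finsum M (\<lambda>j. f i j) J) (finsum M (\<lambda>i. finsum M (\<lambda>j. f i j) J) I)"
    using insert by (subst M.finsum_insert) (auto simp: Pi_def)
  also have "\<dots> = add M (finsum M (\<lambda>j. f i j) J) (finsum M (\<lambda>j. finsum M (\<lambda>i. f i j) I) J)"
    using insert by simp
  also have "\<dots> = finsum M (\<lambda>j. add M (f i j) (finsum M (\<lambda>i. f i j) I)) J"
    using insert by (subst M.finsum_addf) (auto simp: Pi_def)
  also have "\<dots> = finsum M (\<lambda>j. finsum M (\<lambda>i. f i j) (insert i I)) J"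
    using insert by (intro M.finsum_cong') (auto simp: Pi_def M.finsum_insert)
  finally show ?case .
qed

lemma maschke:
  fixes S :: "('r, 'x) ring_scheme" and M2 :: "('r, 'm2) module" and M3 :: "('r, 'm3) module"
  assumes m2: "left_module S M2" and m3: "left_module S M3"
    and gl: "lin_map (carrier S) M2 M3 gg"
    and hl: "lin_map T M3 M2 h" and sec: "\<forall>z\<in>carrier M3. gg (h z) = z"
    and I: "finite I" and X: "\<And>i. i \<in> I \<Longrightarrow> X i \<in> carrier S"
    and Y: "\<And>i. i \<in> I \<Longrightarrow> Y i \<in> carrier S"
    and B: "\<And>r i j. r \<in> carrier S \<Longrightarrow> B r j i \<in> T" and TS: "T \<subseteq> carrier S"
    and H1: "\<forall>z\<in>carrier M3. finsum M3 (\<lambda>i. smult M3 (mult S (X i) (Y i)) z) I = z"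
    and H2: "\<forall>r\<in>carrier S. \<forall>i\<in>I. \<forall>m\<in>carrier M2.
       smult M2 (mult S r (X i)) m = finsum M2 (\<lambda>j. smult M2 (mult S (X j) (B r j i)) m) I"
    and H3: "\<forall>r\<in>carrier S. \<forall>j\<in>I. \<forall>z\<in>carrier M3.
       smult M3 (mult S (Y j) r) z = finsum M3 (\<lambda>i. smult M3 (mult S (B r j i) (Y i)) z) I"
  shows "splits_wrt (carrier S) M2 M3 gg"
proof -
  have ag2: "abelian_group M2" and ag3: "abelian_group M3" using m2 m3 unfolding left_module_def by auto
  interpret M2: abelian_group M2 by (rule ag2)
  interpret M3: abelian_group M3 by (rule ag3)
  have sm2: "\<And>r x. r \<in> carrier S \<Longrightarrow> x \<in> carrier M2 \<Longrightarrow> smult M2 r x \<in> carrier M2"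
    using m2 unfolding left_module_def by auto
  have sm3: "\<And>r x. r \<in> carrier S \<Longrightarrow> x \<in> carrier M3 \<Longrightarrow> smult M3 r x \<in> carrier M3"
    using m3 unfolding left_module_def by auto
  have ad2: "\<And>r x y. r \<in> carrier S \<Longrightarrow> x \<in> carrier M2 \<Longrightarrow> y \<in> carrier M2 \<Longrightarrow>
      smult M2 r (add M2 x y) = add M2 (smult M2 r x) (smult M2 r y)"
    using m2 unfolding left_module_def by auto
  have ad3: "\<And>r x y. r \<in> carrier S \<Longrightarrow> x \<in> carrier M3 \<Longrightarrow> y \<in> carrier M3 \<Longrightarrow>
      smult M3 r (add M3 x y) = add M3 (smult M3 r x) (smult M3 r y)"
    using m3 unfolding left_module_def by auto
  have as2: "\<And>r r' x. r \<in> carrier S \<Longrightarrow> r' \<in> carrier S \<Longrightarrow> x \<in> carrier M2 \<Longrightarrow>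
      smult M2 (mult S r r') x = smult M2 r (smult M2 r' x)"
    using m2 unfolding left_module_def by auto
  have as3: "\<And>r r' x. r \<in> carrier S \<Longrightarrow> r' \<in> carrier S \<Longrightarrow> x \<in> carrier M3 \<Longrightarrow>
      smult M3 (mult S r r') x = smult M3 r (smult M3 r' x)"
    using m3 unfolding left_module_def by auto
  have hc: "h \<in> carrier M3 \<rightarrow> carrier M2" and ha: "\<forall>x\<in>carrier M3. \<forall>y\<in>carrier M3. h (add M3 x y) = add M2 (h x) (h y)"
    and hT: "\<forall>r\<in>T. \<forall>x\<in>carrier M3. h (smult M3 r x) = smult M2 r (h x)"
    using hl unfolding lin_map_def by auto
  have gc: "gg \<in> carrier M2 \<rightarrow> carrier M3" and ga: "\<forall>x\<in>carrier M2. \<forall>y\<in>carrier M2. gg (add M2 x y) = add M3 (gg x) (gg y)"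
    and gS: "\<forall>r\<in>carrier S. \<forall>x\<in>carrier M2. gg (smult M2 r x) = smult M3 r (gg x)"
    using gl unfolding lin_map_def by auto
  have smf2: "\<And>r \<phi> J. r \<in> carrier S \<Longrightarrow> finite J \<Longrightarrow> \<phi> \<in> J \<rightarrow> carrier M2 \<Longrightarrow>
     smult M2 r (finsum M2 \<phi> J) = finsum M2 (\<lambda>i. smult M2 r (\<phi> i)) J"
    by (rule add_hom_finsum[OF ag2 ag2]) (auto simp: sm2 ad2)
  have hf: "\<And>\<phi> J. finite J \<Longrightarrow> \<phi> \<in> J \<rightarrow> carrier M3 \<Longrightarrow>
     h (finsum M3 \<phi> J) = finsum M2 (\<lambda>i. h (\<phi> i)) J"
    by (rule add_hom_finsum[OF ag3 ag2 hc ha])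
  have gf: "\<And>\<phi> J. finite J \<Longrightarrow> \<phi> \<in> J \<rightarrow> carrier M2 \<Longrightarrow>
     gg (finsum M2 \<phi> J) = finsum M3 (\<lambda>i. gg (\<phi> i)) J"
    by (rule add_hom_finsum[OF ag2 ag3 gc ga])
  define h' where "h' = (\<lambda>z. finsum M2 (\<lambda>i. smult M2 (X i) (h (smult M3 (Y i) z))) I)"
  have hz: "\<And>i z. i \<in> I \<Longrightarrow> z \<in> carrier M3 \<Longrightarrow> h (smult M3 (Y i) z) \<in> carrier M2"
    using hc sm3 Y by blast
  have tmc: "\<And>i z. i \<in> I \<Longrightarrow> z \<in> carrier M3 \<Longrightarrow> smult M2 (X i) (h (smult M3 (Y i) z)) \<in> carrier M2"
    using hz sm2 X by blast
  have h'c: "h' \<in> carrier M3 \<rightarrow> carrier M2"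
    unfolding h'_def using tmc by (auto intro!: M2.finsum_closed)
  have h'a: "\<forall>x\<in>carrier M3. \<forall>y\<in>carrier M3. h' (add M3 x y) = add M2 (h' x) (h' y)"
  proof (intro ballI)
    fix x y assume xy: "x \<in> carrier M3" "y \<in> carrier M3"
    have "h' (add M3 x y) = finsum M2 (\<lambda>i. add M2 (smult M2 (X i) (h (smult M3 (Y i) x))) (smult M2 (X i) (h (smult M3 (Y i) y)))) I"
      unfolding h'_def
    proof (intro M2.finsum_cong')
      fix i assume i: "i \<in> I"
      show "smult M2 (X i) (h (smult M3 (Y i) (add M3 x y))) = add M2 (smult M2 (X i) (h (smult M3 (Y i) x))) (smult M2 (X i) (h (smult M3 (Y i) y)))"
        using i xy ad3 ha sm3 Y X ad2 hz by simp
    qed (use tmc xy in auto)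
    also have "\<dots> = add M2 (h' x) (h' y)"
      unfolding h'_def using tmc xy by (subst M2.finsum_addf) (auto simp: Pi_def)
    finally show "h' (add M3 x y) = add M2 (h' x) (h' y)" .
  qed
  have h'S: "\<forall>r\<in>carrier S. \<forall>z\<in>carrier M3. h' (smult M3 r z) = smult M2 r (h' z)"
  proof (intro ballI)
    fix r z assume r: "r \<in> carrier S" and z: "z \<in> carrier M3"
    let ?f = "\<lambda>j i. smult M2 (mult S (X j) (B r j i)) (h (smult M3 (Y i) z))"
    have BS: "\<And>j i. B r j i \<in> carrier S" using B r TS by blast
    have fc: "\<And>j i. j \<in> I \<Longrightarrow> i \<in> I \<Longrightarrow> ?f j i \<in> carrier M2"
      using as2 X BS sm2 hz z by simp
    have "h' (smult M3 r z) = finsum M2 (\<lambda>j. finsum M2 (\<lambda>i. ?f j i) I) I"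
      unfolding h'_def
    proof (intro M2.finsum_cong')
      fix j assume j: "j \<in> I"
      have c1: "(\<lambda>i. smult M3 (mult S (B r j i) (Y i)) z) \<in> I \<rightarrow> carrier M3"
        using as3 BS Y sm3 z by auto
      have "smult M3 (Y j) (smult M3 r z) = smult M3 (mult S (Y j) r) z"
        using as3 Y j r z by simp
      also have "\<dots> = finsum M3 (\<lambda>i. smult M3 (mult S (B r j i) (Y i)) z) I"
        using H3 r j z by blast
      finally have "h (smult M3 (Y j) (smult M3 r z)) = finsum M2 (\<lambda>i. h (smult M3 (mult S (B r j i) (Y i)) z)) I"
        using hf[OF I c1] by simp
      also have "\<dots> = finsum M2 (\<lambda>i. smult M2 (B r j i) (h (smult M3 (Y i) z))) I"
        using as3 BS Y z hT B r sm3 by (intro M2.finsum_cong') (auto simp: Pi_def intro!: sm2 hz)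
      finally have e1: "h (smult M3 (Y j) (smult M3 r z)) = \<dots>" .
      show "smult M2 (X j) (h (smult M3 (Y j) (smult M3 r z))) = finsum M2 (\<lambda>i. ?f j i) I"
        unfolding e1 using I X j BS hz z sm2 as2 by (subst smf2) (auto simp: Pi_def intro!: M2.finsum_cong')
    qed (use fc in \<open>auto intro!: M2.finsum_closed\<close>)
    also have "\<dots> = finsum M2 (\<lambda>i. finsum M2 (\<lambda>j. ?f j i) I) I"
      by (rule finsum_swap[OF ag2 I I fc])
    also have "\<dots> = finsum M2 (\<lambda>i. smult M2 r (smult M2 (X i) (h (smult M3 (Y i) z)))) I"
    proof (intro M2.finsum_cong')
      fix i assume i: "i \<in> I"
      have "smult M2 r (smult M2 (X i) (h (smult M3 (Y i) z))) = smult M2 (mult S r (X i)) (h (smult M3 (Y i) z))"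
        using as2 r X i hz z by simp
      also have "\<dots> = finsum M2 (\<lambda>j. ?f j i) I" using H2 r i hz z by blast
      finally show "finsum M2 (\<lambda>j. ?f j i) I = smult M2 r (smult M2 (X i) (h (smult M3 (Y i) z)))" by simp
    qed (use fc sm2 r tmc z in \<open>auto intro!: M2.finsum_closed\<close>)
    also have "\<dots> = smult M2 r (h' z)"
      unfolding h'_def using I r tmc z by (subst smf2) (auto simp: Pi_def)
    finally show "h' (smult M3 r z) = smult M2 r (h' z)" .
  qed
  have secz: "\<forall>z\<in>carrier M3. gg (h' z) = z"
  proof
    fix z assume z: "z \<in> carrier M3"
    have "gg (h' z) = finsum M3 (\<lambda>i. gg (smult M2 (X i) (h (smult M3 (Y i) z)))) I"
      unfolding h'_def using tmc z by (subst gf) (auto simp: I Pi_def)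
    also have "\<dots> = finsum M3 (\<lambda>i. smult M3 (mult S (X i) (Y i)) z) I"
      using gS X Y hz sec sm3 z as3 by (intro M3.finsum_cong') (auto simp: Pi_def intro!: sm3)
    also have "\<dots> = z" using H1 z by blast
    finally show "gg (h' z) = z" .
  qed
  show ?thesis unfolding splits_wrt_def lin_map_def
    using h'c h'a h'S secz by blast
qed



locale ctx =
  fixes G :: "'g set" and s t gi :: "'g \<Rightarrow> 'g" and cmp :: "'g \<Rightarrow> 'g \<Rightarrow> 'g"
    and u :: "'g \<Rightarrow> 'a::ring_1" and \<alpha> :: "'g \<Rightarrow> 'a \<Rightarrow> 'a" and a :: 'a
  assumes fin: "finite G"
    and gpd: "groupoid G s t cmp gi"
    and upa: "unital_partial_action G s t cmp gi u \<alpha>"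
    and cen: "\<forall>b. a * b = b * a"
    and tr: "\<forall>e\<in>objs G s. trace_j G s t gi u \<alpha> e a = u e"
begin

lemmas gdd = gpd[unfolded groupoid_def]
lemmas gd1 = gdd[THEN conjunct1] and gd2 = gdd[THEN conjunct2, THEN conjunct1]
  and gd3 = gdd[THEN conjunct2, THEN conjunct2, THEN conjunct1]
  and gd4 = gdd[THEN conjunct2, THEN conjunct2, THEN conjunct2, THEN conjunct1]
  and gd5 = gdd[THEN conjunct2, THEN conjunct2, THEN conjunct2, THEN conjunct2]

lemma g1: "g \<in> G \<Longrightarrow> s g \<in> G \<and> t g \<in> G \<and> s (s g) = s g \<and> t (s g) = s g \<and> s (t g) = t g \<and> t (t g) = t g"
  using gd1 by blast
lemma g2: "g \<in> G \<Longrightarrow> h \<in> G \<Longrightarrow> s g = t h \<Longrightarrow> cmp g h \<in> G \<and> s (cmp g h) = s h \<and> t (cmp g h) = t g"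
  using gd2 by blast
lemma g3: "f \<in> G \<Longrightarrow> g \<in> G \<Longrightarrow> h \<in> G \<Longrightarrow> s f = t g \<Longrightarrow> s g = t h \<Longrightarrow> cmp (cmp f g) h = cmp f (cmp g h)"
  using gd3 by blast
lemma g4: "g \<in> G \<Longrightarrow> cmp (t g) g = g \<and> cmp g (s g) = g"
  using gd4 by blast
lemma g5: "g \<in> G \<Longrightarrow> gi g \<in> G \<and> s (gi g) = t g \<and> t (gi g) = s g \<and> cmp g (gi g) = t g \<and> cmp (gi g) g = s g"
  using gd5 by blast

lemma g6: "g \<in> G \<Longrightarrow> gi (gi g) = g"
proof -
  assume g: "g \<in> G"
  let ?i = "gi g"
  let ?k = "gi ?i"
  have i: "?i \<in> G" "s ?i = t g" "t ?i = s g" "cmp g ?i = t g" using g5[OF g] by auto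
  have k: "?k \<in> G" "s ?k = t ?i" "t ?k = s ?i" "cmp ?i ?k = t ?i" using g5[OF i(1)] by auto
  have "g = cmp g (s g)" using g4[OF g] by simp
  also have "s g = cmp ?i ?k" using k(4) i(3) by simp
  also have "cmp g (cmp ?i ?k) = cmp (cmp g ?i) ?k" using g3[OF g i(1) k(1)] i k by simp
  also have "\<dots> = cmp (t ?k) ?k" using i k by simp
  also have "\<dots> = ?k" using g4[OF k(1)] by simp
  finally show ?thesis by simp
qed

lemma objs_iff: "e \<in> objs G s \<longleftrightarrow> e \<in> G \<and> s e = e"
proof
  assume "e \<in> objs G s"
  then obtain g where "g \<in> G" "e = s g" unfolding objs_def by auto
  then show "e \<in> G \<and> s e = e" using g1 by simp
next
  assume "e \<in> G \<and> s e = e"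
  then have "s e \<in> s ` G" by blast
  then show "e \<in> objs G s" unfolding objs_def using \<open>e \<in> G \<and> s e = e\<close> by simp
qed

lemma g7: "e \<in> objs G s \<Longrightarrow> gi e = e \<and> t e = e"
proof -
  assume e: "e \<in> objs G s"
  then have eG: "e \<in> G" and se: "s e = e" using objs_iff by auto
  have te: "t e = e" using g1[OF eG] se by metis
  have i: "gi e \<in> G" "s (gi e) = t e" "t (gi e) = s e" "cmp e (gi e) = t e" using g5[OF eG] by auto
  have "cmp (t (gi e)) (gi e) = gi e" using g4[OF i(1)] by simp
  then have "cmp e (gi e) = gi e" using i(3) se by simp
  then show ?thesis using i(4) te by simp
qed

lemma t_objs: "g \<in> G \<Longrightarrow> t g \<in> objs G s" "g \<in> G \<Longrightarrow> s g \<in> objs G s"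
  using g1 objs_iff by auto

lemma cancel_r: "x \<in> G \<Longrightarrow> g \<in> G \<Longrightarrow> s x = t g \<Longrightarrow> cmp (cmp x g) (gi g) = x"
proof -
  assume x: "x \<in> G" and g: "g \<in> G" and st: "s x = t g"
  have i: "gi g \<in> G" "t (gi g) = s g" "cmp g (gi g) = t g" using g5[OF g] by auto
  have "cmp (cmp x g) (gi g) = cmp x (cmp g (gi g))" using g3[OF x g i(1) st] i by simp
  also have "\<dots> = cmp x (s x)" using i st by simp
  finally show ?thesis using g4[OF x] by simp
qed

lemma cancel_l: "x \<in> G \<Longrightarrow> g \<in> G \<Longrightarrow> s x = t g \<Longrightarrow> cmp (gi x) (cmp x g) = g"
proof -
  assume x: "x \<in> G" and g: "g \<in> G" and st: "s x = t g"
  have i: "gi x \<in> G" "s (gi x) = t x" "cmp (gi x) x = s x" using g5[OF x] by auto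
  have "cmp (gi x) (cmp x g) = cmp (cmp (gi x) x) g" using g3[OF i(1) x g i(2) st] by simp
  also have "\<dots> = cmp (t g) g" using i st by simp
  finally show ?thesis using g4[OF g] by simp
qed

lemma zA: "0 \<in> Aid u g" unfolding Aid_def by (auto intro: exI[of _ 0])
lemma uA: "u g \<in> Aid u g" unfolding Aid_def by (auto intro: exI[of _ 1])
lemma mulA: "x * u g \<in> Aid u g" unfolding Aid_def by auto

lemmas pdd = upa[unfolded unital_partial_action_def]
lemmas pd0 = pdd[THEN conjunct1] and pdA = pdd[THEN conjunct2, THEN conjunct1]

lemma idem: "g \<in> G \<Longrightarrow> u g * u g = u g"
  using pd0 by blast
lemma ucen: "g \<in> G \<Longrightarrow> b * u g = u g * b"
  using pd0 by blast

lemma memA: "g \<in> G \<Longrightarrow> x \<in> Aid u g \<longleftrightarrow> x * u g = x"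
proof
  assume g: "g \<in> G" and "x \<in> Aid u g"
  then obtain b where "x = b * u g" unfolding Aid_def by auto
  then show "x * u g = x" using idem[OF g] by (simp add: mult.assoc)
next
  assume "x * u g = x" then show "x \<in> Aid u g" using mulA[of x g] by simp
qed

lemma Asub: "g \<in> G \<Longrightarrow> Aid u g \<subseteq> Aid u (t g)"
  using pdA by blast

lemma u_t: "g \<in> G \<Longrightarrow> u g * u (t g) = u g"
proof -
  assume g: "g \<in> G"
  have "u g \<in> Aid u (t g)" using Asub[OF g] uA by blast
  then show ?thesis using memA g1 g by blast
qed

lemmas pd1 = pdd[THEN conjunct2, THEN conjunct2, THEN conjunct1]
  and pd2 = pdd[THEN conjunct2, THEN conjunct2, THEN conjunct2, THEN conjunct1]
  and pd3 = pdd[THEN conjunct2, THEN conjunct2, THEN conjunct2, THEN conjunct2]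

lemma bij: "g \<in> G \<Longrightarrow> bij_betw (\<alpha> g) (Aid u (gi g)) (Aid u g)"
  using pd1 by blast
lemma hom: "g \<in> G \<Longrightarrow> x \<in> Aid u (gi g) \<Longrightarrow> y \<in> Aid u (gi g) \<Longrightarrow>
   \<alpha> g (x + y) = \<alpha> g x + \<alpha> g y \<and> \<alpha> g (x * y) = \<alpha> g x * \<alpha> g y"
  using pd1 by blast
lemma ident: "e \<in> objs G s \<Longrightarrow> x \<in> Aid u e \<Longrightarrow> \<alpha> e x = x"
  using pd2 by blast
lemma comp: "g \<in> G \<Longrightarrow> h \<in> G \<Longrightarrow> s g = t h \<Longrightarrow> x \<in> Aid u (gi h) \<Longrightarrow> \<alpha> h x \<in> Aid u (gi g) \<Longrightarrow>
   x \<in> Aid u (gi (cmp g h)) \<and> \<alpha> g (\<alpha> h x) = \<alpha> (cmp g h) x"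
  using pd3 by blast

lemma maps: "g \<in> G \<Longrightarrow> x \<in> Aid u (gi g) \<Longrightarrow> \<alpha> g x \<in> Aid u g"
  using bij bij_betw_apply by fast


lemma a0: "g \<in> G \<Longrightarrow> \<alpha> g 0 = 0"
  using hom[of g 0 0] zA by auto

lemma inv1: "g \<in> G \<Longrightarrow> x \<in> Aid u (gi g) \<Longrightarrow> \<alpha> (gi g) (\<alpha> g x) = x"
proof -
  assume g: "g \<in> G" and x: "x \<in> Aid u (gi g)"
  have c: "\<alpha> (gi g) (\<alpha> g x) = \<alpha> (cmp (gi g) g) x"
    using comp[of "gi g" g x] g5 g6 g x maps by auto
  have "x \<in> Aid u (s g)" using Asub[of "gi g"] g5 g x by auto
  then show ?thesis using c g5 g ident t_objs by auto
qed

lemma inv2: "g \<in> G \<Longrightarrow> y \<in> Aid u g \<Longrightarrow> \<alpha> g (\<alpha> (gi g) y) = y"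
  using inv1[of "gi g" y] g5 g6 by auto

lemma PA4: assumes x: "x \<in> G" and g: "g \<in> G" and st: "s x = t g"
  shows "\<alpha> x (u (gi x) * u g) = u x * u (cmp x g)"
proof -
  let ?k = "cmp x g"
  have k: "?k \<in> G" "s ?k = s g" "t ?k = t x" using g2 x g st by auto
  have inP: "\<And>y. y \<in> Aid u (gi x) \<Longrightarrow> y \<in> Aid u g \<Longrightarrow> \<alpha> x y \<in> Aid u ?k"
  proof -
    fix y assume y1: "y \<in> Aid u (gi x)" and y2: "y \<in> Aid u g"
    let ?w = "\<alpha> (gi g) y"
    have w: "?w \<in> Aid u (gi g)" using maps[of "gi g" y] g5 g6 g y2 by auto
    have "\<alpha> g ?w = y" using inv2 g y2 by auto
    then have "\<alpha> x y = \<alpha> ?k ?w" using comp[of x g ?w] x g st w y1 by auto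
    moreover have "?w \<in> Aid u (gi ?k)" using comp[of x g ?w] x g st w y1 \<open>\<alpha> g ?w = y\<close> by auto
    ultimately show "\<alpha> x y \<in> Aid u ?k" using maps k by auto
  qed
  have onto: "\<And>q. q \<in> Aid u x \<Longrightarrow> q \<in> Aid u ?k \<Longrightarrow> \<exists>p. p \<in> Aid u (gi x) \<and> p \<in> Aid u g \<and> \<alpha> x p = q"
  proof -
    fix q assume q1: "q \<in> Aid u x" and q2: "q \<in> Aid u ?k"
    let ?p = "\<alpha> (gi x) q"
    have p1: "?p \<in> Aid u (gi x)" using maps[of "gi x" q] g5 g6 x q1 by auto
    let ?w = "\<alpha> (gi ?k) q"
    have w: "?w \<in> Aid u (gi ?k)" using maps[of "gi ?k" q] g5 g6 k q2 by auto
    have aw: "\<alpha> ?k ?w = q" using inv2 k q2 by auto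
    have ix: "gi x \<in> G" "s (gi x) = t ?k" using g5 x k by auto
    have q1': "\<alpha> ?k ?w \<in> Aid u (gi (gi x))" using aw q1 g6 x by auto
    have cc: "cmp (gi x) ?k = g" using cancel_l x g st by auto
    have "?w \<in> Aid u (gi g) \<and> \<alpha> (gi x) q = \<alpha> g ?w"
      using comp[OF ix(1) k(1) ix(2) w q1'] cc aw by auto
    then have "?p \<in> Aid u g" using maps g by auto
    moreover have "\<alpha> x ?p = q" using inv2 x q1 by auto
    ultimately show "\<exists>p. p \<in> Aid u (gi x) \<and> p \<in> Aid u g \<and> \<alpha> x p = q" using p1 by blast
  qed
  let ?e = "u (gi x) * u g"
  have gx: "gi x \<in> G" using g5 x by auto
  have e1: "?e \<in> Aid u (gi x)" using memA[OF gx] idem[OF gx] ucen[OF gx] by (metis mult.assoc)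
  have e2: "?e \<in> Aid u g" using memA[OF g] idem[OF g] by (simp add: mult.assoc)
  let ?q = "u x * u ?k"
  have q1: "?q \<in> Aid u x" using memA[OF x] idem[OF x] ucen[OF x] by (metis mult.assoc)
  have q2: "?q \<in> Aid u ?k" using memA[OF k(1)] idem[OF k(1)] by (simp add: mult.assoc)
  obtain p where p: "p \<in> Aid u (gi x)" "p \<in> Aid u g" "\<alpha> x p = ?q" using onto q1 q2 by blast
  have ep: "?e * p = p"
  proof -
    have "?e * p = u (gi x) * (u g * p)" by (simp add: mult.assoc)
    also have "u g * p = p" using memA[OF g] p(2) ucen[OF g] by metis
    also have "u (gi x) * p = p" using memA[OF gx] p(1) ucen[OF gx] by metis
    finally show ?thesis .
  qed
  have "\<alpha> x ?e * ?q = ?q"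
    using hom[OF x e1 p(1)] ep p(3) by metis
  moreover have ae1: "\<alpha> x ?e \<in> Aid u x" using maps x e1 by auto
  have ae2: "\<alpha> x ?e \<in> Aid u ?k" using inP e1 e2 by auto
  have "\<alpha> x ?e * ?q = \<alpha> x ?e"
    using ae1 ae2 memA[OF x] memA[OF k(1)] by (metis mult.assoc)
  ultimately show ?thesis by simp
qed

lemma PA5: assumes x: "x \<in> G" and g: "g \<in> G" and st: "s x = t g" and y: "y \<in> Aid u (gi x)"
  shows "\<alpha> x (y * u g) = \<alpha> x y * u (cmp x g)"
proof -
  have gx: "gi x \<in> G" using g5 x by auto
  have e1: "u (gi x) * u g \<in> Aid u (gi x)" using memA[OF gx] idem[OF gx] ucen[OF gx] by (metis mult.assoc)
  have "y * u g = y * (u (gi x) * u g)" using memA[OF gx] y by (metis mult.assoc)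
  then have "\<alpha> x (y * u g) = \<alpha> x y * (u x * u (cmp x g))" using hom[OF x y e1] PA4[OF x g st] by simp
  also have "\<dots> = \<alpha> x y * u (cmp x g)" using maps[OF x y] memA[OF x] by (metis mult.assoc)
  finally show ?thesis .
qed

lemma PA3: "x \<in> G \<Longrightarrow> \<alpha> x (u (gi x)) = u x"
proof -
  assume x: "x \<in> G"
  have gx: "gi x \<in> G" using g5 x by auto
  have "u (gi x) * u (s x) = u (gi x)" using u_t[OF gx] g5 x by auto
  then show ?thesis using PA4[of x "s x"] x g1 g4 idem by auto
qed

end


lemma sum_single:
  assumes "finite P" "\<And>p. p \<in> P \<Longrightarrow> p \<noteq> p0 \<Longrightarrow> f p = 0"
  shows "sum f P = (if p0 \<in> P then f p0 else 0)"
proof (cases "p0 \<in> P")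
  case True
  have "sum f P = f p0 + sum f (P - {p0})" using True assms(1) by (simp add: sum.remove)
  also have "sum f (P - {p0}) = 0" using assms(2) by (intro sum.neutral) auto
  finally show ?thesis using True by simp
next
  case False
  then show ?thesis using assms by (auto intro!: sum.neutral)
qed

context ctx begin

abbreviation "S \<equiv> skew_ring G s t cmp gi u \<alpha>"

definition mono :: "'g \<Rightarrow> 'a \<Rightarrow> 'g \<Rightarrow> 'a" where
  "mono g v = (\<lambda>k. if k = g then v else 0)"

definition D where "D g = mono g (u g)"
definition C where "C g = mono (gi g) (a * u (gi g))"
abbreviation "E \<equiv> skew_emb G s u"
definition \<beta> where "\<beta> r \<rho> g = (if s \<rho> = s g then \<alpha> (gi \<rho>) (r (cmp \<rho> (gi g)) * u \<rho>) else 0)"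

lemma carrierS: "r \<in> carrier S \<longleftrightarrow> (\<forall>g. (g \<in> G \<longrightarrow> r g \<in> Aid u g) \<and> (g \<notin> G \<longrightarrow> r g = 0))"
  unfolding skew_ring_def by simp

lemma multS: "mult S x y k = (\<Sum>(g, h)\<in>{(g, h) \<in> G \<times> G. s g = t h \<and> cmp g h = k}.
                          \<alpha> g (\<alpha> (gi g) (x g) * y h))"
  unfolding skew_ring_def by simp

lemma finP: "finite {(g, h) \<in> G \<times> G. P g h}"
  by (rule finite_subset[OF _ finite_cartesian_product[OF fin fin]]) auto

lemma mono_carrier: "g \<in> G \<Longrightarrow> v \<in> Aid u g \<Longrightarrow> mono g v \<in> carrier S"
  unfolding carrierS mono_def using zA by auto

lemma mult_mono: assumes g: "g \<in> G" and h: "h \<in> G"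
  shows "mult S (mono g v) (mono h w) =
     (if s g = t h then mono (cmp g h) (\<alpha> g (\<alpha> (gi g) v * w)) else (\<lambda>k. 0))"
proof
  fix k
  let ?P = "{(x, y) \<in> G \<times> G. s x = t y \<and> cmp x y = k}"
  let ?f = "\<lambda>(x, y). \<alpha> x (\<alpha> (gi x) (mono g v x) * mono h w y)"
  have z: "\<And>p. p \<in> ?P \<Longrightarrow> p \<noteq> (g, h) \<Longrightarrow> ?f p = 0"
  proof -
    fix p assume p: "p \<in> ?P" "p \<noteq> (g, h)"
    obtain x y where xy: "p = (x, y)" by force
    have xG: "x \<in> G" "gi x \<in> G" using p xy g5 by auto
    show "?f p = 0"
    proof (cases "x = g")
      case True
      then have "y \<noteq> h" using p xy by auto
      then show ?thesis using xy a0[OF xG(1)] by (simp add: mono_def)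
    next
      case False
      then show ?thesis using xy a0[OF xG(1)] a0[OF xG(2)] by (simp add: mono_def)
    qed
  qed
  have "mult S (mono g v) (mono h w) k = sum ?f ?P" by (simp add: multS)
  also have "\<dots> = (if (g, h) \<in> ?P then ?f (g, h) else 0)" by (rule sum_single[OF finP z])
  finally show "mult S (mono g v) (mono h w) k =
     (if s g = t h then mono (cmp g h) (\<alpha> g (\<alpha> (gi g) v * w)) else (\<lambda>k. 0)) k"
    using g h by (auto simp: mono_def)
qed

lemma gg: "g \<in> G \<Longrightarrow> gi g \<in> G" using g5 by auto

lemma DC: assumes g: "g \<in> G"
  shows "mult S (D g) (C g) = mono (t g) (\<alpha> g (a * u (gi g)))"
proof -
  have i: "gi g \<in> G" "s g = t (gi g)" "cmp g (gi g) = t g" using g5[OF g] by auto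
  have "\<alpha> (gi g) (u g) = u (gi g)" using PA3[OF i(1)] g6[OF g] by simp
  moreover have "u (gi g) * (a * u (gi g)) = a * u (gi g)"
    using cen idem[OF i(1)] by (metis mult.assoc)
  ultimately show ?thesis unfolding D_def C_def using mult_mono[OF g i(1)] i by simp
qed

lemma oneS: "one S = (\<lambda>g. if g \<in> objs G s then u g else 0)"
  unfolding skew_ring_def by simp

lemma fin_objs: "finite (objs G s)" unfolding objs_def using fin by simp

lemma sec_sum: "(\<lambda>k. \<Sum>g\<in>G. mult S (D g) (C g) k) = one S"
proof
  fix k
  let ?v = "\<lambda>g. \<alpha> g (a * u (gi g))"
  have "(\<Sum>g\<in>G. mult S (D g) (C g) k) = (\<Sum>g\<in>G. if k = t g then ?v g else 0)"
    using DC by (intro sum.cong) (auto simp: mono_def)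
  also have "\<dots> = sum ?v {g\<in>G. k = t g}" by (rule sum.inter_filter[OF fin, symmetric])
  finally have e: "(\<Sum>g\<in>G. mult S (D g) (C g) k) = sum ?v {g\<in>G. k = t g}" .
  show "(\<Sum>g\<in>G. mult S (D g) (C g) k) = one S k"
  proof (cases "k \<in> objs G s")
    case True
    have "trace_j G s t gi u \<alpha> k a = (\<Sum>ei\<in>objs G s. sum ?v {x. x \<in> {g\<in>G. k = t g} \<and> s x = ei})"
      unfolding trace_j_def trace_ij_def by (intro sum.cong) (auto intro!: sum.cong)
    also have "\<dots> = sum ?v {g\<in>G. k = t g}"
      by (rule sum.group) (use fin fin_objs t_objs in auto)
    finally show ?thesis using e tr True oneS by simp
  next
    case False
    then have "{g\<in>G. k = t g} = {}" using t_objs by auto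
    then have "sum ?v {g\<in>G. k = t g} = 0" by (simp only: sum.empty)
    then show ?thesis using e False oneS by simp
  qed
qed

lemma E_carrier: "E b \<in> carrier S"
  unfolding carrierS skew_emb_def using objs_iff mulA zA by auto

lemma DE: assumes r: "\<rho> \<in> G"
  shows "mult S (D \<rho>) (E b) = mono \<rho> (\<alpha> \<rho> (b * u (gi \<rho>)))"
proof
  fix k
  let ?P = "{(x, y) \<in> G \<times> G. s x = t y \<and> cmp x y = k}"
  let ?f = "\<lambda>(x, y). \<alpha> x (\<alpha> (gi x) (D \<rho> x) * E b y)"
  have z: "\<And>p. p \<in> ?P \<Longrightarrow> p \<noteq> (\<rho>, s \<rho>) \<Longrightarrow> ?f p = 0"
  proof -
    fix p assume p: "p \<in> ?P" "p \<noteq> (\<rho>, s \<rho>)"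
    obtain x y where xy: "p = (x, y)" by force
    have xG: "x \<in> G" "gi x \<in> G" "y \<in> G" "s x = t y" using p xy g5 by auto
    show "?f p = 0"
    proof (cases "x = \<rho>")
      case True
      have "y \<notin> objs G s"
      proof
        assume "y \<in> objs G s"
        then have "t y = y" using g7 by auto
        then show False using True xy p xG by auto
      qed
      then show ?thesis using xy a0[OF xG(1)] by (simp add: skew_emb_def)
    next
      case False
      then show ?thesis using xy a0[OF xG(1)] a0[OF xG(2)] by (simp add: D_def mono_def)
    qed
  qed
  have sr: "s \<rho> \<in> G" "t (s \<rho>) = s \<rho>" "s \<rho> \<in> objs G s" using g1[OF r] t_objs[OF r] by auto
  have "mult S (D \<rho>) (E b) k = sum ?f ?P" by (simp add: multS)
  also have "\<dots> = (if (\<rho>, s \<rho>) \<in> ?P then ?f (\<rho>, s \<rho>) else 0)" by (rule sum_single[OF finP z])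
  also have "\<dots> = (if \<rho> = k then \<alpha> \<rho> (\<alpha> (gi \<rho>) (u \<rho>) * (b * u (s \<rho>))) else 0)"
    using r sr g4[OF r] by (auto simp: D_def mono_def skew_emb_def)
  also have "\<alpha> (gi \<rho>) (u \<rho>) * (b * u (s \<rho>)) = b * u (gi \<rho>)"
  proof -
    have gr: "gi \<rho> \<in> G" using gg r by auto
    have "\<alpha> (gi \<rho>) (u \<rho>) = u (gi \<rho>)" using PA3[OF gr] g6[OF r] by simp
    moreover have "u (gi \<rho>) * u (s \<rho>) = u (gi \<rho>)" using u_t[OF gr] g5[OF r] by simp
    ultimately show ?thesis using ucen[OF gr] by (metis mult.assoc)
  qed
  finally show "mult S (D \<rho>) (E b) k = mono \<rho> (\<alpha> \<rho> (b * u (gi \<rho>))) k"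
    by (auto simp: mono_def)
qed

lemma EC: assumes g: "g \<in> G"
  shows "mult S (E b) (C g) = mono (gi g) (b * a * u (gi g))"
proof
  fix k
  let ?P = "{(x, y) \<in> G \<times> G. s x = t y \<and> cmp x y = k}"
  let ?f = "\<lambda>(x, y). \<alpha> x (\<alpha> (gi x) (E b x) * C g y)"
  have ig: "gi g \<in> G" "t (gi g) = s g" using g5[OF g] by auto
  have z: "\<And>p. p \<in> ?P \<Longrightarrow> p \<noteq> (s g, gi g) \<Longrightarrow> ?f p = 0"
  proof -
    fix p assume p: "p \<in> ?P" "p \<noteq> (s g, gi g)"
    obtain x y where xy: "p = (x, y)" by force
    have xG: "x \<in> G" "gi x \<in> G" "y \<in> G" "s x = t y" using p xy g5 by auto
    show "?f p = 0"
    proof (cases "y = gi g")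
      case True
      have "x \<notin> objs G s"
      proof
        assume "x \<in> objs G s"
        then have "s x = x" using objs_iff by auto
        then show False using True xy p xG ig by auto
      qed
      then show ?thesis using xy a0[OF xG(1)] a0[OF xG(2)] by (simp add: skew_emb_def)
    next
      case False
      then show ?thesis using xy a0[OF xG(1)] by (simp add: C_def mono_def)
    qed
  qed
  have sg: "s g \<in> G" "s g \<in> objs G s" "gi (s g) = s g" using g1[OF g] t_objs[OF g] g7 by auto
  have cc: "cmp (s g) (gi g) = gi g" using g4[OF ig(1)] ig by simp
  have "mult S (E b) (C g) k = sum ?f ?P" by (simp add: multS)
  also have "\<dots> = (if (s g, gi g) \<in> ?P then ?f (s g, gi g) else 0)" by (rule sum_single[OF finP z])
  also have "\<dots> = (if gi g = k then \<alpha> (s g) (\<alpha> (s g) (b * u (s g)) * (a * u (gi g))) else 0)"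
    using sg ig cc g1[OF g] by (auto simp: C_def mono_def skew_emb_def)
  also have "\<alpha> (s g) (\<alpha> (s g) (b * u (s g)) * (a * u (gi g))) = b * a * u (gi g)"
  proof -
    have "\<alpha> (s g) (b * u (s g)) = b * u (s g)" using ident[OF sg(2)] mulA by blast
    moreover have "b * u (s g) * (a * u (gi g)) = b * a * u (gi g)"
    proof -
      have x1: "u (s g) * (a * u (gi g)) = a * (u (gi g) * u (s g))"
      proof -
        have "u (s g) * (a * u (gi g)) = (u (s g) * a) * u (gi g)" by (simp add: mult.assoc)
        also have "\<dots> = a * (u (s g) * u (gi g))" using ucen[OF sg(1), of a] by (metis mult.assoc)
        also have "u (s g) * u (gi g) = u (gi g) * u (s g)" using ucen[OF sg(1), of "u (gi g)"] by simp
        finally show ?thesis .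
      qed
      have "b * u (s g) * (a * u (gi g)) = b * a * (u (gi g) * u (s g))"
        using x1 by (simp add: mult.assoc)
      also have "u (gi g) * u (s g) = u (gi g)" using u_t[OF ig(1)] ig by simp
      finally show ?thesis .
    qed
    moreover have "b * u (s g) * (a * u (gi g)) \<in> Aid u (s g)"
      using mulA[of "b * a * u (gi g)" "s g"] memA[OF sg(1)] calculation(2)
      by (metis mult.assoc mulA ucen[OF sg(1)])
    ultimately show ?thesis using ident[OF sg(2)] by simp
  qed
  finally show "mult S (E b) (C g) k = mono (gi g) (b * a * u (gi g)) k"
    by (auto simp: mono_def)
qed

lemma rD: assumes r: "r \<in> carrier S" and g: "g \<in> G"
  shows "mult S r (D g) k = (if k \<in> G \<and> s k = s g then r (cmp k (gi g)) * u k else 0)"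
proof -
  let ?P = "{(x, y) \<in> G \<times> G. s x = t y \<and> cmp x y = k}"
  let ?f = "\<lambda>(x, y). \<alpha> x (\<alpha> (gi x) (r x) * D g y)"
  have ig: "gi g \<in> G" "s (gi g) = t g" "t (gi g) = s g" "cmp (gi g) g = s g" using g5[OF g] by auto
  have eq: "mult S r (D g) k = sum ?f ?P" by (simp add: multS)
  show ?thesis
  proof (cases "k \<in> G \<and> s k = s g")
    case True
    let ?x = "cmp k (gi g)"
    have x: "?x \<in> G" "s ?x = t g" "t ?x = t k" using g2[of k "gi g"] True ig by auto
    have cx: "cmp ?x g = k"
      using g3[of k "gi g" g] True ig g4[of k] g by auto
    have z: "\<And>p. p \<in> ?P \<Longrightarrow> p \<noteq> (?x, g) \<Longrightarrow> ?f p = 0"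
    proof -
      fix p assume p: "p \<in> ?P" "p \<noteq> (?x, g)"
      obtain x y where xy: "p = (x, y)" by force
      have xG: "x \<in> G" "y \<in> G" "s x = t y" "cmp x y = k" using p xy by auto
      have "y \<noteq> g"
      proof
        assume "y = g"
        then have "x = ?x" using cancel_r[OF xG(1) g] xG by auto
        then show False using p xy \<open>y = g\<close> by auto
      qed
      then show "?f p = 0" using xy a0[OF xG(1)] by (simp add: D_def mono_def)
    qed
    have pin: "(?x, g) \<in> ?P" using x cx g by auto
    have rx: "r ?x \<in> Aid u (gi (gi ?x))" using r x g6 by (auto simp: carrierS)
    have m: "\<alpha> (gi ?x) (r ?x) \<in> Aid u (gi ?x)" using maps[OF gg[OF x(1)] rx] .
    have "sum ?f ?P = ?f (?x, g)" using sum_single[OF finP z] pin by simp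
    also have "\<dots> = \<alpha> ?x (\<alpha> (gi ?x) (r ?x) * u g)" by (simp add: D_def mono_def)
    also have "\<dots> = \<alpha> ?x (\<alpha> (gi ?x) (r ?x)) * u k" using PA5[OF x(1) g x(2) m] cx by simp
    also have "\<dots> = r ?x * u k" using inv2[OF x(1)] r x by (auto simp: carrierS)
    finally show ?thesis using eq True by simp
  next
    case False
    have "sum ?f ?P = 0"
    proof (rule sum.neutral, clarify)
      fix x y assume xy: "x \<in> G" "y \<in> G" "s x = t y" "k = cmp x y"
      have "y \<noteq> g"
      proof
        assume "y = g"
        then show False using False xy g2[of x y] by auto
      qed
      then show "\<alpha> x (\<alpha> (gi x) (r x) * D g y) = 0" using a0[OF xy(1)] by (simp add: D_def mono_def)
    qed
    then show ?thesis using eq False by auto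
  qed
qed

lemma comm_D: assumes r: "r \<in> carrier S" and g: "g \<in> G"
  shows "mult S r (D g) = (\<lambda>k. \<Sum>\<rho>\<in>G. mult S (D \<rho>) (E (\<beta> r \<rho> g)) k)"
proof
  fix k
  have "(\<Sum>\<rho>\<in>G. mult S (D \<rho>) (E (\<beta> r \<rho> g)) k) = (\<Sum>\<rho>\<in>G. if k = \<rho> then \<alpha> \<rho> (\<beta> r \<rho> g * u (gi \<rho>)) else 0)"
    using DE by (intro sum.cong) (auto simp: mono_def)
  also have "\<dots> = (if k \<in> G then \<alpha> k (\<beta> r k g * u (gi k)) else 0)" using fin by simp
  finally have e: "(\<Sum>\<rho>\<in>G. mult S (D \<rho>) (E (\<beta> r \<rho> g)) k) = \<dots>" .
  show "mult S r (D g) k = (\<Sum>\<rho>\<in>G. mult S (D \<rho>) (E (\<beta> r \<rho> g)) k)"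
  proof (cases "k \<in> G \<and> s k = s g")
    case True
    let ?z = "r (cmp k (gi g)) * u k"
    have kG: "k \<in> G" using True by auto
    have zk: "?z \<in> Aid u (gi (gi k))" using g6[OF kG] mulA by simp
    have w: "\<alpha> (gi k) ?z \<in> Aid u (gi k)" using maps[OF gg[OF kG] zk] .
    have "\<alpha> (gi k) ?z * u (gi k) = \<alpha> (gi k) ?z" using w memA gg[OF kG] by blast
    then have "\<alpha> k (\<beta> r k g * u (gi k)) = ?z" using True inv2[OF kG] mulA by (simp add: \<beta>_def)
    then show ?thesis using e rD[OF r g] True by simp
  next
    case False
    have "k \<in> G \<Longrightarrow> \<alpha> k (\<beta> r k g * u (gi k)) = 0" using False a0 by (simp add: \<beta>_def)
    then show ?thesis using e rD[OF r g] False by auto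
  qed
qed

lemma rC: assumes r: "r \<in> carrier S" and \<rho>: "\<rho> \<in> G"
  shows "mult S (C \<rho>) r k = (if k \<in> G \<and> t k = s \<rho> then \<alpha> (gi \<rho>) (\<alpha> \<rho> (a * u (gi \<rho>)) * r (cmp \<rho> k)) else 0)"
proof -
  let ?P = "{(x, y) \<in> G \<times> G. s x = t y \<and> cmp x y = k}"
  let ?f = "\<lambda>(x, y). \<alpha> x (\<alpha> (gi x) (C \<rho> x) * r y)"
  have ir: "gi \<rho> \<in> G" "s (gi \<rho>) = t \<rho>" "t (gi \<rho>) = s \<rho>" "gi (gi \<rho>) = \<rho>" using g5[OF \<rho>] g6[OF \<rho>] by auto
  have eq: "mult S (C \<rho>) r k = sum ?f ?P" by (simp add: multS)
  show ?thesis
  proof (cases "k \<in> G \<and> t k = s \<rho>")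
    case True
    let ?y = "cmp \<rho> k"
    have y: "?y \<in> G" "t ?y = t \<rho>" using g2[of \<rho> k] True \<rho> by auto
    have cy: "cmp (gi \<rho>) ?y = k" using cancel_l[OF \<rho>] True by auto
    have z: "\<And>p. p \<in> ?P \<Longrightarrow> p \<noteq> (gi \<rho>, ?y) \<Longrightarrow> ?f p = 0"
    proof -
      fix p assume p: "p \<in> ?P" "p \<noteq> (gi \<rho>, ?y)"
      obtain x y where xy: "p = (x, y)" by force
      have xG: "x \<in> G" "y \<in> G" "s x = t y" "cmp x y = k" using p xy by auto
      have "x \<noteq> gi \<rho>"
      proof
        assume "x = gi \<rho>"
        then have "y = ?y" using cancel_l[OF ir(1) xG(2)] xG ir by auto
        then show False using p xy \<open>x = gi \<rho>\<close> by auto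
      qed
      then show "?f p = 0" using xy a0[OF xG(1)] a0[OF gg[OF xG(1)]] by (simp add: C_def mono_def)
    qed
    have pin: "(gi \<rho>, ?y) \<in> ?P" using ir y cy by auto
    have "sum ?f ?P = ?f (gi \<rho>, ?y)" using sum_single[OF finP z] pin by simp
    also have "\<dots> = \<alpha> (gi \<rho>) (\<alpha> \<rho> (a * u (gi \<rho>)) * r ?y)" using ir by (simp add: C_def mono_def)
    finally show ?thesis using eq True by simp
  next
    case False
    have "sum ?f ?P = 0"
    proof (rule sum.neutral, clarify)
      fix x y assume xy: "x \<in> G" "y \<in> G" "s x = t y" "k = cmp x y"
      have "x \<noteq> gi \<rho>"
      proof
        assume "x = gi \<rho>"
        then show False using False xy g2[of x y] ir by auto
      qed
      then show "\<alpha> x (\<alpha> (gi x) (C \<rho> x) * r y) = 0" using a0[OF xy(1)] a0[OF gg[OF xy(1)]] by (simp add: C_def mono_def)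
    qed
    then show ?thesis using eq False by auto
  qed
qed

lemma comm_C: assumes r: "r \<in> carrier S" and \<rho>: "\<rho> \<in> G"
  shows "mult S (C \<rho>) r = (\<lambda>k. \<Sum>g\<in>G. mult S (E (\<beta> r \<rho> g)) (C g) k)"
proof
  fix k
  let ?F = "\<lambda>g. \<beta> r \<rho> g * a * u (gi g)"
  have e0: "(\<Sum>g\<in>G. mult S (E (\<beta> r \<rho> g)) (C g) k) = (\<Sum>g\<in>G. if k = gi g then ?F g else 0)"
    using EC by (intro sum.cong) (auto simp: mono_def)
  have ir: "gi \<rho> \<in> G" "s (gi \<rho>) = t \<rho>" "t (gi \<rho>) = s \<rho>" "gi (gi \<rho>) = \<rho>" using g5[OF \<rho>] g6[OF \<rho>] by auto
  show "mult S (C \<rho>) r k = (\<Sum>g\<in>G. mult S (E (\<beta> r \<rho> g)) (C g) k)"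
  proof (cases "k \<in> G")
    case kG: True
    have "(\<Sum>g\<in>G. if k = gi g then ?F g else 0) = (\<Sum>g\<in>G. if g = gi k then ?F g else 0)"
      using g6 kG by (intro sum.cong) auto
    also have "\<dots> = ?F (gi k)" using fin gg[OF kG] by simp
    finally have e: "(\<Sum>g\<in>G. mult S (E (\<beta> r \<rho> g)) (C g) k) = \<beta> r \<rho> (gi k) * a * u k"
      using e0 g6[OF kG] by simp
    have ik: "s (gi k) = t k" "gi (gi k) = k" using g5[OF kG] g6[OF kG] by auto
    show ?thesis
    proof (cases "t k = s \<rho>")
      case True
      let ?y = "cmp \<rho> k"
      have y: "?y \<in> G" "t ?y = t \<rho>" using g2[of \<rho> k] True \<rho> kG by auto
      have cy: "cmp (gi \<rho>) ?y = k" using cancel_l[OF \<rho> kG] True by auto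
      let ?z = "r ?y * u \<rho>"
      let ?w = "\<alpha> (gi \<rho>) ?z"
      let ?c = "\<alpha> \<rho> (a * u (gi \<rho>))"
      have bet: "\<beta> r \<rho> (gi k) = ?w" using True ik by (simp add: \<beta>_def)
      have zA': "?z \<in> Aid u (gi (gi \<rho>))" using ir mulA by simp
      have ry: "r ?y * u ?y = r ?y" using r y memA[OF y(1)] by (auto simp: carrierS)
      have c: "?c \<in> Aid u \<rho>" using maps[OF \<rho>] mulA by blast
      have cA: "?c \<in> Aid u (gi (gi \<rho>))" using c ir by simp
      have cz: "?c * r ?y = ?c * ?z"
      proof -
        have "?c * r ?y = (?c * u \<rho>) * r ?y" using c memA[OF \<rho>] by simp
        also have "\<dots> = ?c * (r ?y * u \<rho>)" using ucen[OF \<rho>, of "r ?y"] by (simp add: mult.assoc)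
        finally show ?thesis .
      qed
      have w: "?w \<in> Aid u (gi \<rho>)" using maps[OF ir(1) zA'] .
      have ac: "\<alpha> (gi \<rho>) ?c = a * u (gi \<rho>)" using inv1[OF \<rho>] mulA by blast
      have "\<alpha> (gi \<rho>) (?c * r ?y) = a * u (gi \<rho>) * ?w"
        using cz hom[OF ir(1) cA zA'] ac by simp
      also have "\<dots> = a * ?w"
      proof -
        have "u (gi \<rho>) * ?w = ?w" using w memA[OF ir(1)] ucen[OF ir(1), of ?w] by simp
        then show ?thesis by (simp add: mult.assoc)
      qed
      finally have L: "\<alpha> (gi \<rho>) (?c * r ?y) = a * ?w" .
      have zy: "?z * u ?y = ?z"
      proof -
        have "?z * u ?y = r ?y * (u \<rho> * u ?y)" by (simp add: mult.assoc)
        also have "u \<rho> * u ?y = u ?y * u \<rho>" using ucen[OF \<rho>] by simp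
        finally show ?thesis using ry by (simp add: mult.assoc[symmetric])
      qed
      have wk: "?w * u k = ?w"
        using PA5[OF ir(1) y(1) _ zA'] ir y cy zy by simp
      have R: "?w * a * u k = a * ?w"
      proof -
        have "?w * a * u k = a * ?w * u k" using cen by simp
        also have "\<dots> = a * ?w" using wk by (simp add: mult.assoc)
        finally show ?thesis .
      qed
      show ?thesis using rC[OF r \<rho>] e bet L R kG True by simp
    next
      case False
      have "\<beta> r \<rho> (gi k) = 0" using False ik by (simp add: \<beta>_def)
      then show ?thesis using rC[OF r \<rho>] e False by simp
    qed
  next
    case False
    have "(\<Sum>g\<in>G. if k = gi g then ?F g else 0) = 0"
      using False gg by (intro sum.neutral) auto
    then show ?thesis using rC[OF r \<rho>] e0 False by auto
  qed
qed

end


context ctx begin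

lemma sumS_carrier: assumes "finite J" "\<And>j. j \<in> J \<Longrightarrow> w j \<in> carrier S"
  shows "(\<lambda>k. \<Sum>j\<in>J. w j k) \<in> carrier S"
  unfolding carrierS
proof (intro allI conjI impI)
  fix g assume g: "g \<in> G"
  have "(\<Sum>j\<in>J. w j g) * u g = (\<Sum>j\<in>J. w j g * u g)" by (simp add: sum_distrib_right)
  also have "\<dots> = (\<Sum>j\<in>J. w j g)" using assms(2) g memA[OF g] by (intro sum.cong) (auto simp: carrierS)
  finally show "(\<Sum>j\<in>J. w j g) \<in> Aid u g" using memA[OF g] by blast
next
  fix g assume "g \<notin> G"
  then show "(\<Sum>j\<in>J. w j g) = 0" using assms(2) by (intro sum.neutral) (auto simp: carrierS)
qed

lemma smult_sum:
  fixes M :: "('g \<Rightarrow> 'a, 'm) module"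
  assumes M: "left_module S M" and J: "finite J" and w: "\<And>j. j \<in> J \<Longrightarrow> w j \<in> carrier S"
    and m: "m \<in> carrier M"
  shows "smult M (\<lambda>k. \<Sum>j\<in>J. w j k) m = finsum M (\<lambda>j. smult M (w j) m) J"
  using J w
proof (induction J rule: finite_induct)
  case empty
  have ag: "abelian_group M" using M unfolding left_module_def by auto
  interpret M: abelian_group M by (rule ag)
  have z: "zero S \<in> carrier S" using zA unfolding carrierS by (simp add: skew_ring_def)
  have zz: "add S (zero S) (zero S) = zero S" by (simp add: skew_ring_def)
  have cl: "smult M (zero S) m \<in> carrier M" using M z m unfolding left_module_def by auto
  have "smult M (zero S) m = add M (smult M (zero S) m) (smult M (zero S) m)"
    using M z m zz unfolding left_module_def by metis
  then have "smult M (zero S) m = zero M" using cl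
    by (metis M.add.l_cancel_one' M.zero_closed M.r_zero)
  moreover have "(\<lambda>k. \<Sum>j\<in>{}. w j k) = zero S" by (simp add: skew_ring_def)
  ultimately show ?case by simp
next
  case (insert j J)
  have ag: "abelian_group M" using M unfolding left_module_def by auto
  interpret M: abelian_group M by (rule ag)
  have wj: "w j \<in> carrier S" using insert by auto
  have wJ: "(\<lambda>k. \<Sum>j\<in>J. w j k) \<in> carrier S" using sumS_carrier insert by auto
  have "(\<lambda>k. \<Sum>j\<in>insert j J. w j k) = add S (w j) (\<lambda>k. \<Sum>j\<in>J. w j k)"
    using insert by (simp add: skew_ring_def)
  then have "smult M (\<lambda>k. \<Sum>j\<in>insert j J. w j k) m
      = add M (smult M (w j) m) (smult M (\<lambda>k. \<Sum>j\<in>J. w j k) m)"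
    using M wj wJ m unfolding left_module_def by metis
  also have "\<dots> = finsum M (\<lambda>j. smult M (w j) m) (insert j J)"
    using insert M m unfolding left_module_def by (subst M.finsum_insert) (auto simp: Pi_def)
  finally show ?case .
qed

lemma D_carrier: "g \<in> G \<Longrightarrow> D g \<in> carrier S"
  unfolding D_def using mono_carrier uA by blast
lemma C_carrier: "g \<in> G \<Longrightarrow> C g \<in> carrier S"
  unfolding C_def using mono_carrier mulA gg by blast

lemma splits:
  fixes M2 :: "('g \<Rightarrow> 'a, 'm2) module" and M3 :: "('g \<Rightarrow> 'a, 'm3) module"
  assumes m2: "left_module S M2" and m3: "left_module S M3"
    and gl: "lin_map (carrier S) M2 M3 gg"
    and hl: "lin_map (range E) M3 M2 h" and sec: "\<forall>z\<in>carrier M3. gg (h z) = z"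
  shows "splits_wrt (carrier S) M2 M3 gg"
proof (rule maschke[OF m2 m3 gl hl sec fin D_carrier C_carrier, where B = "\<lambda>r j i. E (\<beta> r j i)"])
  show "\<And>r i j. r \<in> carrier S \<Longrightarrow> E (\<beta> r j i) \<in> range E" by blast
  show "range E \<subseteq> carrier S" using E_carrier by blast
  show "\<forall>z\<in>carrier M3. finsum M3 (\<lambda>i. smult M3 (mult S (D i) (C i)) z) G = z"
  proof
    fix z assume z: "z \<in> carrier M3"
    have c: "\<And>i. i \<in> G \<Longrightarrow> mult S (D i) (C i) \<in> carrier S"
      using DC mono_carrier g1 Asub maps mulA by (metis subsetD)
    have "finsum M3 (\<lambda>i. smult M3 (mult S (D i) (C i)) z) G = smult M3 (one S) z"
      using smult_sum[OF m3 fin, where w="\<lambda>i. mult S (D i) (C i)", OF c z] sec_sum by simp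
    also have "\<dots> = z" using m3 z unfolding left_module_def by auto
    finally show "finsum M3 (\<lambda>i. smult M3 (mult S (D i) (C i)) z) G = z" .
  qed
  show "\<forall>r\<in>carrier S. \<forall>i\<in>G. \<forall>m\<in>carrier M2.
       smult M2 (mult S r (D i)) m = finsum M2 (\<lambda>j. smult M2 (mult S (D j) (E (\<beta> r j i))) m) G"
  proof (intro ballI)
    fix r i m assume r: "r \<in> carrier S" and i: "i \<in> G" and m: "m \<in> carrier M2"
    have c: "\<And>j. j \<in> G \<Longrightarrow> mult S (D j) (E (\<beta> r j i)) \<in> carrier S"
      using DE mono_carrier maps mulA by metis
    show "smult M2 (mult S r (D i)) m = finsum M2 (\<lambda>j. smult M2 (mult S (D j) (E (\<beta> r j i))) m) G"
      using comm_D[OF r i] smult_sum[OF m2 fin, where w="\<lambda>j. mult S (D j) (E (\<beta> r j i))", OF c m] by simp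
  qed
  show "\<forall>r\<in>carrier S. \<forall>j\<in>G. \<forall>z\<in>carrier M3.
       smult M3 (mult S (C j) r) z = finsum M3 (\<lambda>i. smult M3 (mult S (E (\<beta> r j i)) (C i)) z) G"
  proof (intro ballI)
    fix r j z assume r: "r \<in> carrier S" and j: "j \<in> G" and z: "z \<in> carrier M3"
    have c: "\<And>i. i \<in> G \<Longrightarrow> mult S (E (\<beta> r j i)) (C i) \<in> carrier S"
      using EC mono_carrier mulA gg by metis
    show "smult M3 (mult S (C j) r) z = finsum M3 (\<lambda>i. smult M3 (mult S (E (\<beta> r j i)) (C i)) z) G"
      using comm_C[OF r j] smult_sum[OF m3 fin, where w="\<lambda>i. mult S (E (\<beta> r j i)) (C i)", OF c z] by simp
  qed
qed

end

theorem corollary3p6: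
  fixes G :: "'g set" and s t gi :: "'g \<Rightarrow> 'g" and cmp :: "'g \<Rightarrow> 'g \<Rightarrow> 'g"
    and u :: "'g \<Rightarrow> 'a::ring_1" and \<alpha> :: "'g \<Rightarrow> 'a \<Rightarrow> 'a"
  assumes "finite G"
    and "groupoid G s t cmp gi"
    and "connected_groupoid G s t"
    and "direct_sum_objs G s u"
    and "unital_partial_action G s t cmp gi u \<alpha>"
    and "\<exists>a. (\<forall>b. a * b = b * a) \<and> (\<forall>e\<in>objs G s. trace_j G s t gi u \<alpha> e a = u e)"
  shows "\<forall>(M1 :: ('g \<Rightarrow> 'a, 'm1) module) (M2 :: ('g \<Rightarrow> 'a, 'm2) module)
            (M3 :: ('g \<Rightarrow> 'a, 'm3) module) f g.
           semisimple_ext_at (skew_ring G s t cmp gi u \<alpha>) (range (skew_emb G s u))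
             M1 M2 M3 f g"
proof (intro allI)
  obtain a where a: "\<forall>b. a * b = b * a" "\<forall>e\<in>objs G s. trace_j G s t gi u \<alpha> e a = u e"
    using assms(6) by blast
  interpret ctx G s t gi cmp u \<alpha> a
    using assms(1,2,5) a by (unfold_locales) auto
  fix M1 :: "('g \<Rightarrow> 'a, 'm1) module" and M2 :: "('g \<Rightarrow> 'a, 'm2) module"
    and M3 :: "('g \<Rightarrow> 'a, 'm3) module" and f g
  show "semisimple_ext_at (skew_ring G s t cmp gi u \<alpha>) (range (skew_emb G s u)) M1 M2 M3 f g"
    unfolding semisimple_ext_at_def
  proof (intro impI, elim conjE)
    assume se: "short_exact S M1 M2 M3 f g" and sp: "splits_wrt (range E) M2 M3 g"
    obtain h where h: "lin_map (range E) M3 M2 h" "\<forall>z\<in>carrier M3. g (h z) = z"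
      using sp unfolding splits_wrt_def by blast
    show "splits_wrt (carrier S) M2 M3 g"
      using splits[OF _ _ _ h] se unfolding short_exact_def by blast
  qed
qed

end
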